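(* Let $\sigma$ be a 2-structure and $X\subsetneq V(\sigma)$ with $\sigma[X]$ prime; write $\overline{X}=V(\sigma)\setminus X$ and $\Gamma=\Gamma_{(\sigma,\overline{X})}$. Suppose Statement (S3) holds (there is no $Y\subseteq\overline{X}$ with $|Y|=3$ and $\sigma[X\cup Y]$ prime). Let $B_q\in q_{(\sigma,\overline{X})}$. For each $v\in\overline{X}\setminus B_q$, the sets $N^+_v=\{x\in B_q:\{x,v\}\in E(\Gamma)\}$ and $N^-_v=\{x\in B_q:\{x,v\}\notin E(\Gamma)\}$ are modules of $\sigma[B_q]$. Moreover, if $N^+_v\neq\emptyset$ and $N^-_v\neq\emptyset$, then: (1) if $B_q=\langle X\rangle^{(e,f)}_\sigma$ with $e,f\in E(\sigma)$, then $(z,x)\in e$ and $(x,z)\in f$ for all $z\in N^-_v$, $x\in N^+_v$; (2) if $B_q=X^{(e,f)}_\sigma(\alpha)$ with $\alpha\in X$ and $e,f\in E(\sigma)$, then $(z,x)\in f$ and $(x,z)\in e$ for all $z\in N^-_v$, $x\in N^+_v$.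
   Context: A 2-structure $\sigma$ consists of a vertex set $V(\sigma)$ and an equivalence relation $\equiv_\sigma$ on ordered pairs of distinct vertices; $E(\sigma)$ is its set of classes; $\sigma[W]$ is the induced 2-structure on $W$. A module is a set $M$ such that for all $x,y\in M$ and $v\notin M$, $(x,v)\equiv_\sigma(y,v)$ and $(v,x)\equiv_\sigma(v,y)$; $\sigma$ is prime if $|V(\sigma)|\geq3$ and its only modules are $\emptyset$, $V(\sigma)$ and singletons. Given $\sigma[X]$ prime: ${\rm Ext}_\sigma(X)=\{v\in\overline{X}:\sigma[X\cup\{v\}]\text{ prime}\}$; $\langle X\rangle_\sigma=\{v\in\overline{X}: X\text{ is a module of }\sigma[X\cup\{v\}]\}$; for $\alpha\in X$, $X_\sigma(\alpha)=\{v\in\overline{X}:\{\alpha,v\}\text{ is a module of }\sigma[X\cup\{v\}]\}$. For $e,f\in E(\sigma)$: $\langle X\rangle^{(e,f)}_\sigma=\{v\in\langle X\rangle_\sigma:(v,\alpha)\in e,(\alpha,v)\in f\}$ for any $\alpha\in X$; $X^{(e,f)}_\sigma(\alpha)=\{v\in X_\sigma(\alpha):(v,\alpha)\in e,(\alpha,v)\in f\}$. $q_{(\sigma,\overline{X})}$ is the partition of $\overline{X}$ formed by the nonempty sets among ${\rm Ext}_\sigma(X)$, $\langle X\rangle^{(e,f)}_\sigma$, $X^{(e,f)}_\sigma(\alpha)$ ($e,f\in E(\sigma)$, $\alpha\in X$). The outside graph $\Gamma_{(\sigma,\overline{X})}$ has vertex set $\overline{X}$ and edges the 2-element sets $Y\subseteq\overline{X}$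 with $\sigma[X\cup Y]$ prime. *)

theory Defs
  imports Main
begin

definition offdiag :: "'a set \<Rightarrow> ('a \<times> 'a) set" where
  "offdiag V = {(x, y). x \<in> V \<and> y \<in> V \<and> x \<noteq> y}"

definition two_structure :: "'a set \<Rightarrow> (('a \<times> 'a) \<times> ('a \<times> 'a)) set \<Rightarrow> bool" where
  "two_structure V R \<longleftrightarrow> equiv (offdiag V) R"

definition classes :: "'a set \<Rightarrow> (('a \<times> 'a) \<times> ('a \<times> 'a)) set \<Rightarrow> ('a \<times> 'a) set set" where
  "classes V R = offdiag V // R"

text \<open>The relation of the induced 2-structure sigma[W] (its vertex set is W).\<close>
definition ind :: "(('a \<times> 'a) \<times> ('a \<times> 'a)) set \<Rightarrow> 'a set \<Rightarrow> (('a \<times> 'a) \<times> ('a \<times> 'a)) set" where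
  "ind R W = R \<inter> (offdiag W \<times> offdiag W)"

definition is_module :: "'a set \<Rightarrow> (('a \<times> 'a) \<times> ('a \<times> 'a)) set \<Rightarrow> 'a set \<Rightarrow> bool" where
  "is_module V R M \<longleftrightarrow> M \<subseteq> V \<and>
     (\<forall>x\<in>M. \<forall>y\<in>M. \<forall>v\<in>V - M. ((x, v), (y, v)) \<in> R \<and> ((v, x), (v, y)) \<in> R)"

definition is_prime :: "'a set \<Rightarrow> (('a \<times> 'a) \<times> ('a \<times> 'a)) set \<Rightarrow> bool" where
  "is_prime V R \<longleftrightarrow> (\<exists>a\<in>V. \<exists>b\<in>V. \<exists>c\<in>V. a \<noteq> b \<and> a \<noteq> c \<and> b \<noteq> c) \<and>
     (\<forall>M. is_module V R M \<longrightarrow> M = {} \<or> M = V \<or> (\<exists>x. M = {x}))"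

definition Ext :: "'a set \<Rightarrow> (('a \<times> 'a) \<times> ('a \<times> 'a)) set \<Rightarrow> 'a set \<Rightarrow> 'a set" where
  "Ext V R X = {v \<in> V - X. is_prime (X \<union> {v}) (ind R (X \<union> {v}))}"

definition angle :: "'a set \<Rightarrow> (('a \<times> 'a) \<times> ('a \<times> 'a)) set \<Rightarrow> 'a set \<Rightarrow> 'a set" where
  "angle V R X = {v \<in> V - X. is_module (X \<union> {v}) (ind R (X \<union> {v})) X}"

definition Xalpha :: "'a set \<Rightarrow> (('a \<times> 'a) \<times> ('a \<times> 'a)) set \<Rightarrow> 'a set \<Rightarrow> 'a \<Rightarrow> 'a set" where
  "Xalpha V R X \<alpha> = {v \<in> V - X. is_module (X \<union> {v}) (ind R (X \<union> {v})) {\<alpha>, v}}"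

text \<open>The sets with upper index (e,f); for angle, the choice of alpha in X is
  irrelevant since X is a module, we require it for all alpha in X.\<close>
definition angle_ef :: "'a set \<Rightarrow> (('a \<times> 'a) \<times> ('a \<times> 'a)) set \<Rightarrow> 'a set \<Rightarrow>
    ('a \<times> 'a) set \<Rightarrow> ('a \<times> 'a) set \<Rightarrow> 'a set" where
  "angle_ef V R X e f = {v \<in> angle V R X. \<forall>\<alpha>\<in>X. (v, \<alpha>) \<in> e \<and> (\<alpha>, v) \<in> f}"

definition Xalpha_ef :: "'a set \<Rightarrow> (('a \<times> 'a) \<times> ('a \<times> 'a)) set \<Rightarrow> 'a set \<Rightarrow> 'a \<Rightarrow>
    ('a \<times> 'a) set \<Rightarrow> ('a \<times> 'a) set \<Rightarrow> 'a set" where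
  "Xalpha_ef V R X \<alpha> e f = {v \<in> Xalpha V R X \<alpha>. (v, \<alpha>) \<in> e \<and> (\<alpha>, v) \<in> f}"

definition qpart :: "'a set \<Rightarrow> (('a \<times> 'a) \<times> ('a \<times> 'a)) set \<Rightarrow> 'a set \<Rightarrow> 'a set set" where
  "qpart V R X =
     ({Ext V R X}
      \<union> {angle_ef V R X e f | e f. e \<in> classes V R \<and> f \<in> classes V R}
      \<union> {Xalpha_ef V R X \<alpha> e f | \<alpha> e f. \<alpha> \<in> X \<and> e \<in> classes V R \<and> f \<in> classes V R})
     - {{}}"

definition gamma_edges :: "'a set \<Rightarrow> (('a \<times> 'a) \<times> ('a \<times> 'a)) set \<Rightarrow> 'a set \<Rightarrow> 'a set set" where
  "gamma_edges V R X = {Y. Y \<subseteq> V - X \<and> card Y = 2 \<and> is_prime (X \<union> Y) (ind R (X \<union> Y))}"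

definition Nplus :: "'a set \<Rightarrow> (('a \<times> 'a) \<times> ('a \<times> 'a)) set \<Rightarrow> 'a set \<Rightarrow> 'a set \<Rightarrow> 'a \<Rightarrow> 'a set" where
  "Nplus V R X B v = {x \<in> B. {x, v} \<in> gamma_edges V R X}"

definition Nminus :: "'a set \<Rightarrow> (('a \<times> 'a) \<times> ('a \<times> 'a)) set \<Rightarrow> 'a set \<Rightarrow> 'a set \<Rightarrow> 'a \<Rightarrow> 'a set" where
  "Nminus V R X B v = {x \<in> B. {x, v} \<notin> gamma_edges V R X}"

end

theory Submission
  imports Defs
begin

lemma ts_R: "two_structure V R \<Longrightarrow> ((a,b),(c,d)) \<in> R \<Longrightarrow> a\<in>V \<and> b\<in>V \<and> a\<noteq>b \<and> c\<in>V \<and> d\<in>V \<and> c\<noteq>d"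
  unfolding two_structure_def equiv_def refl_on_def offdiag_def by blast
lemma ts_refl: "two_structure V R \<Longrightarrow> a\<in>V \<Longrightarrow> b\<in>V \<Longrightarrow> a\<noteq>b \<Longrightarrow> ((a,b),(a,b)) \<in> R"
  unfolding two_structure_def equiv_def refl_on_def offdiag_def by blast
lemma ts_sym: "two_structure V R \<Longrightarrow> (p,q) \<in> R \<Longrightarrow> (q,p) \<in> R"
  unfolding two_structure_def equiv_def sym_def by blast
lemma ts_trans: "two_structure V R \<Longrightarrow> (p,q) \<in> R \<Longrightarrow> (q,r) \<in> R \<Longrightarrow> (p,r) \<in> R"
  unfolding two_structure_def equiv_def trans_def by blast

lemma mod_iff:
  assumes "two_structure V R" "W \<subseteq> V"
  shows "is_module W (ind R W) M \<longleftrightarrow> M \<subseteq> W \<and>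
     (\<forall>x\<in>M. \<forall>y\<in>M. \<forall>u\<in>W - M. ((x,u),(y,u)) \<in> R \<and> ((u,x),(u,y)) \<in> R)"
  unfolding is_module_def ind_def offdiag_def by auto

lemma mod_restrict:
  assumes "two_structure V R" "W \<subseteq> V" "W' \<subseteq> W" "is_module W (ind R W) M"
  shows "is_module W' (ind R W') (M \<inter> W')"
proof -
  have W'V: "W' \<subseteq> V" using assms by blast
  show ?thesis using assms(3,4) unfolding mod_iff[OF assms(1) assms(2)] mod_iff[OF assms(1) W'V] by blast
qed

lemma prime_card3: "is_prime X (ind R X) \<Longrightarrow> \<exists>a b c. a\<in>X \<and> b\<in>X \<and> c\<in>X \<and> a\<noteq>b \<and> a\<noteq>c \<and> b\<noteq>c"
  unfolding is_prime_def by blast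

lemma prime_nontriv: "is_prime W (ind R W) \<Longrightarrow> is_module W (ind R W) M \<Longrightarrow> M \<noteq> {} \<Longrightarrow> M \<noteq> W \<Longrightarrow> (\<forall>x. M \<noteq> {x}) \<Longrightarrow> False"
  unfolding is_prime_def by blast

lemma L1:
  assumes ts: "two_structure V R" and XV: "X \<subseteq> V" and pX: "is_prime X (ind R X)"
    and p: "p \<in> X"
    and h1: "\<forall>a\<in>X. \<forall>b\<in>X. ((z,a),(z,b))\<in>R \<and> ((a,z),(b,z))\<in>R"
    and h2: "\<forall>w\<in>X-{p}. ((p,w),(z,w))\<in>R \<and> ((w,p),(w,z))\<in>R"
  shows False
proof -
  have "\<forall>a\<in>X - {p}. \<forall>b\<in>X - {p}. \<forall>u\<in>X - (X - {p}). ((a,u),(b,u)) \<in> R \<and> ((u,a),(u,b)) \<in> R"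
  proof (intro ballI)
    fix a b u assume a: "a \<in> X - {p}" and b: "b \<in> X - {p}" and u: "u \<in> X - (X - {p})"
    then have up: "u = p" by auto
    have 1: "((a,p),(a,z)) \<in> R" using h2 a ts_sym[OF ts] by blast
    have 2: "((a,z),(b,z)) \<in> R" using h1 a b by blast
    have 3: "((b,z),(b,p)) \<in> R" using h2 b ts_sym[OF ts] by blast
    have 4: "((p,a),(z,a)) \<in> R" using h2 a by blast
    have 5: "((z,a),(z,b)) \<in> R" using h1 a b by blast
    have 6: "((z,b),(p,b)) \<in> R" using h2 b ts_sym[OF ts] by blast
    show "((a,u),(b,u)) \<in> R \<and> ((u,a),(u,b)) \<in> R"
      using up 1 2 3 4 5 6 ts_trans[OF ts] by meson
  qed
  then have m: "is_module X (ind R X) (X - {p})" unfolding mod_iff[OF ts XV] by blast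
  moreover obtain a b c where abc: "a\<in>X" "b\<in>X" "c\<in>X" "a\<noteq>b" "a\<noteq>c" "b\<noteq>c" using prime_card3[OF pX] by blast
  have n1: "X - {p} \<noteq> {}" using abc by blast
  have n2: "X - {p} \<noteq> X" using p by blast
  have n3: "\<forall>x. X - {p} \<noteq> {x}"
  proof (intro allI notI)
    fix x assume "X - {p} = {x}"
    then have "\<forall>y\<in>X. y = p \<or> y = x" by blast
    then show False using abc by metis
  qed
  show False using prime_nontriv[OF pX m n1 n2 n3] .
qed

lemma L2:
  assumes ts: "two_structure V R" and XV: "X \<subseteq> V" and pX: "is_prime X (ind R X)"
    and p: "p \<in> X" and q: "q \<in> X" and pq: "p \<noteq> q"
    and h1: "\<forall>w\<in>X-{q}. ((q,w),(z,w))\<in>R \<and> ((w,q),(w,z))\<in>R"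
    and h2: "\<forall>w\<in>X-{p}. ((p,w),(z,w))\<in>R \<and> ((w,p),(w,z))\<in>R"
  shows False
proof -
  have "\<forall>a\<in>{p,q}. \<forall>b\<in>{p,q}. \<forall>u\<in>X - {p,q}. ((a,u),(b,u)) \<in> R \<and> ((u,a),(u,b)) \<in> R"
  proof (intro ballI)
    fix a b u assume a: "a \<in> {p,q}" and b: "b \<in> {p,q}" and u: "u \<in> X - {p,q}"
    have uV: "u \<in> V" using u XV by auto
    have u1: "u \<in> X - {p}" "u \<in> X - {q}" using u by auto
    have pr: "((p,u),(q,u)) \<in> R \<and> ((u,p),(u,q)) \<in> R"
      using h1[rule_format, OF u1(2)] h2[rule_format, OF u1(1)] ts_sym[OF ts] ts_trans[OF ts] by meson
    have rp: "((p,u),(p,u)) \<in> R \<and> ((u,p),(u,p)) \<in> R" "((q,u),(q,u)) \<in> R \<and> ((u,q),(u,q)) \<in> R"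
      using ts_refl[OF ts] u p q XV by auto
    show "((a,u),(b,u)) \<in> R \<and> ((u,a),(u,b)) \<in> R"
      using a b pr rp ts_sym[OF ts] by blast
  qed
  then have m: "is_module X (ind R X) {p,q}" unfolding mod_iff[OF ts XV] using p q by blast
  moreover obtain a b c where abc: "a\<in>X" "b\<in>X" "c\<in>X" "a\<noteq>b" "a\<noteq>c" "b\<noteq>c" using prime_card3[OF pX] by blast
  have n2: "{p,q} \<noteq> X"
  proof
    assume "{p,q} = X"
    then have "\<forall>y\<in>X. y = p \<or> y = q" by blast
    then show False using abc by metis
  qed
  have n3: "\<forall>x. {p,q} \<noteq> {x}"
  proof (intro allI notI)
    fix x assume "{p,q} = {x}"
    then have "p \<in> {x}" "q \<in> {x}" by auto
    then show False using pq by simp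
  qed
  show False using prime_nontriv[OF pX m _ n2 n3] by blast
qed

lemma iso:
  assumes ts: "two_structure V R" and SV: "S \<subseteq> V" and aV: "a \<in> V" and bV: "b \<in> V"
    and aS: "a \<notin> S" and bS: "b \<notin> S" and ab: "a \<noteq> b"
    and h: "\<forall>u\<in>S. ((a,u),(b,u)) \<in> R \<and> ((u,a),(u,b)) \<in> R"
    and pa: "is_prime (S \<union> {a}) (ind R (S \<union> {a}))"
  shows "is_prime (S \<union> {b}) (ind R (S \<union> {b}))"
proof -
  define g where "g u = (if u = b then a else u)" for u
  define k where "k u = (if u = a then b else u)" for u
  have SaV: "S \<union> {a} \<subseteq> V" and SbV: "S \<union> {b} \<subseteq> V" using SV aV bV by auto
  have gk: "\<And>u. u \<in> S \<union> {a} \<Longrightarrow> g (k u) = u" unfolding g_def k_def using ab bS by auto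
  have kg: "\<And>u. u \<in> S \<union> {b} \<Longrightarrow> k (g u) = u" unfolding g_def k_def using ab aS by auto
  have kin: "\<And>u. u \<in> S \<union> {a} \<Longrightarrow> k u \<in> S \<union> {b}" unfolding k_def by auto
  have gin: "\<And>u. u \<in> S \<union> {b} \<Longrightarrow> g u \<in> S \<union> {a}" unfolding g_def by auto
  have tr: "((p,q),(g p, g q)) \<in> R" if p: "p \<in> S \<union> {b}" and q: "q \<in> S \<union> {b}" and pq: "p \<noteq> q" for p q
  proof (cases "p = b")
    case True
    then have "q \<in> S" "q \<noteq> b" using q pq by auto
    then show ?thesis using True h ts_sym[OF ts] unfolding g_def by auto
  next
    case False
    note pb = False
    show ?thesis
    proof (cases "q = b")
      case True
      then have "p \<in> S" using p pb by auto
      then show ?thesis using True pb h ts_sym[OF ts] unfolding g_def by auto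
    next
      case False
      then show ?thesis using pb ts_refl[OF ts] p q pq SbV unfolding g_def by auto
    qed
  qed
  obtain a1 b1 c1 where abc: "a1 \<in> S \<union> {a}" "b1 \<in> S \<union> {a}" "c1 \<in> S \<union> {a}" "a1\<noteq>b1" "a1\<noteq>c1" "b1\<noteq>c1"
    using prime_card3[OF pa] by blast
  have three: "\<exists>x\<in>S \<union> {b}. \<exists>y\<in>S \<union> {b}. \<exists>w\<in>S \<union> {b}. x \<noteq> y \<and> x \<noteq> w \<and> y \<noteq> w"
  proof (intro bexI conjI)
    show "k a1 \<noteq> k b1" using abc gk by metis
    show "k a1 \<noteq> k c1" using abc gk by metis
    show "k b1 \<noteq> k c1" using abc gk by metis
  qed (use abc kin in auto)
  have mods: "M = {} \<or> M = S \<union> {b} \<or> (\<exists>x. M = {x})"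
    if M: "is_module (S \<union> {b}) (ind R (S \<union> {b})) M" for M
  proof -
    have Msub: "M \<subseteq> S \<union> {b}" and Mm: "\<forall>x\<in>M. \<forall>y\<in>M. \<forall>u\<in>(S \<union> {b}) - M. ((x,u),(y,u)) \<in> R \<and> ((u,x),(u,y)) \<in> R"
      using M unfolding mod_iff[OF ts SbV] by auto
    have "is_module (S \<union> {a}) (ind R (S \<union> {a})) (g ` M)"
      unfolding mod_iff[OF ts SaV]
    proof
      show "g ` M \<subseteq> S \<union> {a}" using Msub gin by auto
      show "\<forall>x'\<in>g ` M. \<forall>y'\<in>g ` M. \<forall>u'\<in>(S \<union> {a}) - g ` M. ((x',u'),(y',u')) \<in> R \<and> ((u',x'),(u',y')) \<in> R"
      proof (intro ballI)
        fix x' y' u' assume x': "x' \<in> g ` M" and y': "y' \<in> g ` M" and u': "u' \<in> (S \<union> {a}) - g ` M"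
        obtain x where x: "x \<in> M" "x' = g x" using x' by auto
        obtain y where y: "y \<in> M" "y' = g y" using y' by auto
        define u where "u = k u'"
        have uu: "u' = g u" using gk u' u_def by auto
        have uS: "u \<in> S \<union> {b}" using kin u' u_def by auto
        have uM: "u \<notin> M" using u' uu by auto
        have xS: "x \<in> S \<union> {b}" "y \<in> S \<union> {b}" using x y Msub by auto
        have xu: "x \<noteq> u" "y \<noteq> u" using x y uM by auto
        have m1: "((x,u),(y,u)) \<in> R \<and> ((u,x),(u,y)) \<in> R" using Mm x y uS uM by auto
        have t1: "((x,u),(g x, g u)) \<in> R" "((y,u),(g y, g u)) \<in> R"
          "((u,x),(g u, g x)) \<in> R" "((u,y),(g u, g y)) \<in> R"
          using tr xS uS xu by auto
        show "((x',u'),(y',u')) \<in> R \<and> ((u',x'),(u',y')) \<in> R"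
          unfolding x(2) y(2) uu using m1 t1 ts_sym[OF ts] ts_trans[OF ts] by meson
      qed
    qed
    then have "g ` M = {} \<or> g ` M = S \<union> {a} \<or> (\<exists>x. g ` M = {x})"
      using pa unfolding is_prime_def by blast
    moreover have "M = k ` (g ` M)" using kg Msub by (force simp: image_comp)
    moreover have "k ` (S \<union> {a}) = S \<union> {b}"
    proof
      show "k ` (S \<union> {a}) \<subseteq> S \<union> {b}" using kin by auto
      show "S \<union> {b} \<subseteq> k ` (S \<union> {a})" using kg gin by (metis image_eqI subsetI)
    qed
    ultimately show ?thesis by auto
  qed
  show ?thesis unfolding is_prime_def using three mods by blast
qed

lemma ext_prime:
  assumes ts: "two_structure V R" and PV: "P \<subseteq> V" and zV: "z \<in> V" and zP: "z \<notin> P"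
    and pP: "is_prime P (ind R P)" and np: "\<not> is_prime (P \<union> {z}) (ind R (P \<union> {z}))"
  shows "is_module (P \<union> {z}) (ind R (P \<union> {z})) P \<or> (\<exists>p\<in>P. is_module (P \<union> {z}) (ind R (P \<union> {z})) {p,z})"
proof -
  have PzV: "P \<union> {z} \<subseteq> V" using PV zV by auto
  obtain a1 b1 c1 where abc: "a1 \<in> P" "b1 \<in> P" "c1 \<in> P" "a1\<noteq>b1" "a1\<noteq>c1" "b1\<noteq>c1"
    using prime_card3[OF pP] by blast
  then have three: "\<exists>x\<in>P \<union> {z}. \<exists>y\<in>P \<union> {z}. \<exists>w\<in>P \<union> {z}. x \<noteq> y \<and> x \<noteq> w \<and> y \<noteq> w" by blast
  obtain M where M: "is_module (P \<union> {z}) (ind R (P \<union> {z})) M" and M1: "M \<noteq> {}"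
    and M2: "M \<noteq> P \<union> {z}" and M3: "\<forall>x. M \<noteq> {x}"
    using np three unfolding is_prime_def by blast
  have Msub: "M \<subseteq> P \<union> {z}" using M unfolding is_module_def by blast
  have "is_module P (ind R P) (M \<inter> P)" using mod_restrict[OF ts PzV _ M] by blast
  then have "M \<inter> P = {} \<or> M \<inter> P = P \<or> (\<exists>x. M \<inter> P = {x})" using pP unfolding is_prime_def by blast
  then show ?thesis
  proof (elim disjE exE)
    assume "M \<inter> P = {}"
    then have "M \<subseteq> {z}" using Msub by blast
    then have "M = {} \<or> M = {z}" by blast
    then show ?thesis using M1 M3 by blast
  next
    assume "M \<inter> P = P"
    then have "M = P" using Msub M2 zP by blast
    then show ?thesis using M by blast
  next
    fix p assume p: "M \<inter> P = {p}"
    then have "M \<subseteq> {p,z}" "p \<in> M" "p \<in> P" using Msub by auto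
    have "M = {p,z}"
    proof (cases "z \<in> M")
      case True
      then show ?thesis using \<open>M \<subseteq> {p,z}\<close> \<open>p \<in> M\<close> by blast
    next
      case False
      then have "M = {p}" using \<open>M \<subseteq> {p,z}\<close> \<open>p \<in> M\<close> by blast
      then show ?thesis using M3 by blast
    qed
    then show ?thesis using M \<open>p \<in> P\<close> by blast
  qed
qed

lemma four_cases:
  assumes ts: "two_structure V R" and XV: "X \<subseteq> V" and pX: "is_prime X (ind R X)"
    and S3: "\<not> (\<exists>Y. Y \<subseteq> V - X \<and> card Y = 3 \<and> is_prime (X \<union> Y) (ind R (X \<union> Y)))"
    and x: "x \<in> V - X" and z: "z \<in> V - X" and v: "v \<in> V - X"
    and xz: "x \<noteq> z" and xv: "x \<noteq> v" and zv: "z \<noteq> v"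
    and ex: "{x,v} \<in> gamma_edges V R X" and nz: "{z,v} \<notin> gamma_edges V R X"
  shows "is_module (X \<union> {x,v} \<union> {z}) (ind R (X \<union> {x,v} \<union> {z})) (X \<union> {x,v})
    \<or> (\<exists>p\<in>X. is_module (X \<union> {x,v} \<union> {z}) (ind R (X \<union> {x,v} \<union> {z})) {p,z})
    \<or> is_module (X \<union> {x,v} \<union> {z}) (ind R (X \<union> {x,v} \<union> {z})) {v,z}"
proof -
  let ?W = "X \<union> {x,v} \<union> {z}"
  have WV: "?W \<subseteq> V" and PV: "X \<union> {x,v} \<subseteq> V" using XV x z v by auto
  have pP: "is_prime (X \<union> {x,v}) (ind R (X \<union> {x,v}))" using ex unfolding gamma_edges_def by blast
  have c3: "card {x,z,v} = 3" using xz xv zv by simp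
  have sub3: "{x,z,v} \<subseteq> V - X" using x z v by auto
  have np0: "\<not> is_prime (X \<union> {x,z,v}) (ind R (X \<union> {x,z,v}))" using S3 c3 sub3 by blast
  have eq3: "X \<union> {x,z,v} = ?W" by auto
  have np: "\<not> is_prime ?W (ind R ?W)" using np0 unfolding eq3 .
  have zP: "z \<notin> X \<union> {x,v}" using z xz zv by auto
  have zV: "z \<in> V" using z by auto
  from ext_prime[OF ts PV zV zP pP np]
  have "is_module ?W (ind R ?W) (X \<union> {x,v}) \<or> (\<exists>p\<in>X \<union> {x,v}. is_module ?W (ind R ?W) {p,z})" .
  then show ?thesis
  proof (elim disjE bexE)
    fix p assume p: "p \<in> X \<union> {x,v}" and m: "is_module ?W (ind R ?W) {p,z}"
    show ?thesis
    proof (cases "p = x")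
      case True
      have hh: "\<forall>u\<in>?W - {x,z}. ((x,u),(z,u)) \<in> R \<and> ((u,x),(u,z)) \<in> R"
        using m True unfolding mod_iff[OF ts WV] by blast
      have h: "\<forall>u\<in>X \<union> {v}. ((x,u),(z,u)) \<in> R \<and> ((u,x),(u,z)) \<in> R"
      proof
        fix u assume "u \<in> X \<union> {v}"
        then have "u \<in> ?W - {x,z}" using x z xv zv by auto
        then show "((x,u),(z,u)) \<in> R \<and> ((u,x),(u,z)) \<in> R" using hh by blast
      qed
      have eqa: "X \<union> {v} \<union> {x} = X \<union> {x,v}" by auto
      have pa: "is_prime (X \<union> {v} \<union> {x}) (ind R (X \<union> {v} \<union> {x}))" using pP unfolding eqa .
      have SV: "X \<union> {v} \<subseteq> V" using XV v by auto
      have "is_prime (X \<union> {v} \<union> {z}) (ind R (X \<union> {v} \<union> {z}))"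
        using iso[OF ts SV _ _ _ _ xz h pa] x z xv zv by auto
      moreover have "X \<union> {v} \<union> {z} = X \<union> {z,v}" by auto
      moreover have "card {z,v} = 2" using zv by simp
      moreover have "{z,v} \<subseteq> V - X" using z v by auto
      ultimately have "{z,v} \<in> gamma_edges V R X" unfolding gamma_edges_def by auto
      then show ?thesis using nz by blast
    next
      case False
      then have "p \<in> X \<or> p = v" using p by auto
      then show ?thesis using m by blast
    qed
  qed blast
qed

lemma mod_fact:
  assumes "two_structure V R" "W \<subseteq> V" "is_module W (ind R W) M" "a \<in> M" "b \<in> M" "u \<in> W" "u \<notin> M"
  shows "((a,u),(b,u)) \<in> R \<and> ((u,a),(u,b)) \<in> R"
  using assms unfolding mod_iff[OF assms(1,2)] by blast

lemma cls_closed: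
  assumes "two_structure V R" "e \<in> classes V R" "p \<in> e" "(p,q) \<in> R"
  shows "q \<in> e"
  using in_quotient_imp_closed assms unfolding two_structure_def classes_def by metis

lemma mod_intro:
  assumes "two_structure V R" "W \<subseteq> V" "M \<subseteq> W"
    "\<And>a b u. a \<in> M \<Longrightarrow> b \<in> M \<Longrightarrow> u \<in> W \<Longrightarrow> u \<notin> M \<Longrightarrow> ((a,u),(b,u)) \<in> R \<and> ((u,a),(u,b)) \<in> R"
  shows "is_module W (ind R W) M"
  unfolding mod_iff[OF assms(1,2)] using assms(3,4) by blast

lemma case_Ext:
  assumes ts: "two_structure V R" and XV: "X \<subseteq> V" and pX: "is_prime X (ind R X)"
    and x: "x \<in> V - X" and z: "z \<in> V - X" and v: "v \<in> V - X"
    and xz: "x \<noteq> z" and xv: "x \<noteq> v" and zv: "z \<noteq> v"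
    and zE: "z \<in> Ext V R X" and vE: "v \<notin> Ext V R X"
    and cs: "is_module (X \<union> {x,v} \<union> {z}) (ind R (X \<union> {x,v} \<union> {z})) (X \<union> {x,v})
    \<or> (\<exists>p\<in>X. is_module (X \<union> {x,v} \<union> {z}) (ind R (X \<union> {x,v} \<union> {z})) {p,z})
    \<or> is_module (X \<union> {x,v} \<union> {z}) (ind R (X \<union> {x,v} \<union> {z})) {v,z}"
  shows False
proof -
  let ?W = "X \<union> {x,v} \<union> {z}"
  have WV: "?W \<subseteq> V" using XV x z v by auto
  have XzV: "X \<union> {z} \<subseteq> V" using XV z by auto
  have pz: "is_prime (X \<union> {z}) (ind R (X \<union> {z}))" using zE unfolding Ext_def by auto
  obtain a1 b1 c1 where abc: "a1 \<in> X" "b1 \<in> X" "c1 \<in> X" "a1\<noteq>b1" "a1\<noteq>c1" "b1\<noteq>c1"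
    using prime_card3[OF pX] by blast
  have zX: "z \<notin> X" using z by auto
  from cs show False
  proof (elim disjE bexE)
    assume m: "is_module ?W (ind R ?W) (X \<union> {x,v})"
    have "is_module (X \<union> {z}) (ind R (X \<union> {z})) X"
    proof (rule mod_intro[OF ts XzV])
      fix a b u assume "a \<in> X" "b \<in> X" "u \<in> X \<union> {z}" "u \<notin> X"
      then show "((a,u),(b,u)) \<in> R \<and> ((u,a),(u,b)) \<in> R"
        using mod_fact[OF ts WV m, of a b z] zX xz zv by auto
    qed auto
    moreover have "X \<noteq> {}" "X \<noteq> X \<union> {z}" "\<forall>w. X \<noteq> {w}" using abc zX by auto
    ultimately show False using prime_nontriv[OF pz] by blast
  next
    fix p assume p: "p \<in> X" and m: "is_module ?W (ind R ?W) {p,z}"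
    have "is_module (X \<union> {z}) (ind R (X \<union> {z})) {p,z}"
    proof (rule mod_intro[OF ts XzV])
      fix a b u assume "a \<in> {p,z}" "b \<in> {p,z}" "u \<in> X \<union> {z}" "u \<notin> {p,z}"
      then show "((a,u),(b,u)) \<in> R \<and> ((u,a),(u,b)) \<in> R"
        using mod_fact[OF ts WV m, of a b u] by auto
    qed (use p in auto)
    moreover have "{p,z} \<noteq> {}" by auto
    moreover have "{p,z} \<noteq> X \<union> {z}"
    proof
      assume "{p,z} = X \<union> {z}"
      then have "\<forall>y\<in>X. y = p" using zX by blast
      then show False using abc by metis
    qed
    moreover have "\<forall>w. {p,z} \<noteq> {w}"
    proof (intro allI notI)
      fix w assume "{p,z} = {w}"
      then have "p \<in> {w}" "z \<in> {w}" by auto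
      then show False using p zX by simp
    qed
    ultimately show False using prime_nontriv[OF pz] by blast
  next
    assume m: "is_module ?W (ind R ?W) {v,z}"
    have h: "\<forall>u\<in>X. ((z,u),(v,u)) \<in> R \<and> ((u,z),(u,v)) \<in> R"
    proof
      fix u assume u: "u \<in> X"
      then show "((z,u),(v,u)) \<in> R \<and> ((u,z),(u,v)) \<in> R"
        using mod_fact[OF ts WV m, of z v u] z v by auto
    qed
    have "is_prime (X \<union> {v}) (ind R (X \<union> {v}))"
      using iso[OF ts XV _ _ _ _ zv h pz] z v by auto
    then have "v \<in> Ext V R X" unfolding Ext_def using v by auto
    then show False using vE by blast
  qed
qed

lemma case_angle:
  assumes ts: "two_structure V R" and XV: "X \<subseteq> V" and pX: "is_prime X (ind R X)"
    and x: "x \<in> V - X" and z: "z \<in> V - X" and v: "v \<in> V - X"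
    and xz: "x \<noteq> z" and xv: "x \<noteq> v" and zv: "z \<noteq> v"
    and e: "e \<in> classes V R" and f: "f \<in> classes V R"
    and zA: "z \<in> angle_ef V R X e f" and vA: "v \<notin> angle_ef V R X e f"
    and cs: "is_module (X \<union> {x,v} \<union> {z}) (ind R (X \<union> {x,v} \<union> {z})) (X \<union> {x,v})
    \<or> (\<exists>p\<in>X. is_module (X \<union> {x,v} \<union> {z}) (ind R (X \<union> {x,v} \<union> {z})) {p,z})
    \<or> is_module (X \<union> {x,v} \<union> {z}) (ind R (X \<union> {x,v} \<union> {z})) {v,z}"
  shows "(z,x) \<in> e \<and> (x,z) \<in> f"
proof -
  let ?W = "X \<union> {x,v} \<union> {z}"
  have WV: "?W \<subseteq> V" using XV x z v by auto
  have XzV: "X \<union> {z} \<subseteq> V" using XV z by auto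
  have XvV: "X \<union> {v} \<subseteq> V" using XV v by auto
  obtain a1 b1 c1 where abc: "a1 \<in> X" "b1 \<in> X" "c1 \<in> X" "a1\<noteq>b1" "a1\<noteq>c1" "b1\<noteq>c1"
    using prime_card3[OF pX] by blast
  have zX: "z \<notin> X" and vX: "v \<notin> X" and xX: "x \<notin> X" using z v x by auto
  have zmod: "is_module (X \<union> {z}) (ind R (X \<union> {z})) X" and zef: "\<forall>\<alpha>\<in>X. (z,\<alpha>) \<in> e \<and> (\<alpha>,z) \<in> f"
    using zA unfolding angle_ef_def angle_def by auto
  have hz: "\<forall>a\<in>X. \<forall>b\<in>X. ((z,a),(z,b))\<in>R \<and> ((a,z),(b,z))\<in>R"
  proof (intro ballI)
    fix a b assume "a \<in> X" "b \<in> X"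
    then show "((z,a),(z,b))\<in>R \<and> ((a,z),(b,z))\<in>R" using mod_fact[OF ts XzV zmod, of a b z] zX by auto
  qed
  from cs show ?thesis
  proof (elim disjE bexE)
    assume m: "is_module ?W (ind R ?W) (X \<union> {x,v})"
    have 1: "((a1,z),(x,z)) \<in> R \<and> ((z,a1),(z,x)) \<in> R"
      using mod_fact[OF ts WV m, of a1 x z] abc zX xz zv by auto
    show ?thesis using 1 zef abc(1) cls_closed[OF ts e] cls_closed[OF ts f] by blast
  next
    fix p assume p: "p \<in> X" and m: "is_module ?W (ind R ?W) {p,z}"
    have h2: "\<forall>w\<in>X-{p}. ((p,w),(z,w))\<in>R \<and> ((w,p),(w,z))\<in>R"
    proof
      fix w assume "w \<in> X - {p}"
      then show "((p,w),(z,w))\<in>R \<and> ((w,p),(w,z))\<in>R" using mod_fact[OF ts WV m, of p z w] zX by auto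
    qed
    show ?thesis using L1[OF ts XV pX p hz h2] by blast
  next
    assume m: "is_module ?W (ind R ?W) {v,z}"
    have hv: "\<forall>u\<in>X. ((v,u),(z,u)) \<in> R \<and> ((u,v),(u,z)) \<in> R"
    proof
      fix u assume u: "u \<in> X"
      then show "((v,u),(z,u)) \<in> R \<and> ((u,v),(u,z)) \<in> R"
        using mod_fact[OF ts WV m, of v z u] zX vX by auto
    qed
    have "is_module (X \<union> {v}) (ind R (X \<union> {v})) X"
    proof (rule mod_intro[OF ts XvV])
      fix a b u assume a: "a \<in> X" and b: "b \<in> X" and "u \<in> X \<union> {v}" "u \<notin> X"
      then have u: "u = v" by auto
      have "((a,v),(a,z)) \<in> R" "((a,z),(b,z)) \<in> R" "((b,z),(b,v)) \<in> R"
        "((v,a),(z,a)) \<in> R" "((z,a),(z,b)) \<in> R" "((z,b),(v,b)) \<in> R"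
        using hv hz a b ts_sym[OF ts] by blast+
      then show "((a,u),(b,u)) \<in> R \<and> ((u,a),(u,b)) \<in> R"
        unfolding u using ts_trans[OF ts] by meson
    qed auto
    moreover have "\<forall>\<alpha>\<in>X. (v,\<alpha>) \<in> e \<and> (\<alpha>,v) \<in> f"
    proof
      fix \<alpha> assume a: "\<alpha> \<in> X"
      have "((z,\<alpha>),(v,\<alpha>)) \<in> R" "((\<alpha>,z),(\<alpha>,v)) \<in> R" using hv a ts_sym[OF ts] by blast+
      then show "(v,\<alpha>) \<in> e \<and> (\<alpha>,v) \<in> f" using zef a cls_closed[OF ts e] cls_closed[OF ts f] by blast
    qed
    ultimately have "v \<in> angle_ef V R X e f" unfolding angle_ef_def angle_def using v by auto
    then show ?thesis using vA by blast
  qed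
qed

lemma case_Xalpha:
  assumes ts: "two_structure V R" and XV: "X \<subseteq> V" and pX: "is_prime X (ind R X)"
    and x: "x \<in> V - X" and z: "z \<in> V - X" and v: "v \<in> V - X"
    and xz: "x \<noteq> z" and xv: "x \<noteq> v" and zv: "z \<noteq> v" and al: "\<alpha> \<in> X"
    and e: "e \<in> classes V R" and f: "f \<in> classes V R"
    and zA: "z \<in> Xalpha_ef V R X \<alpha> e f" and xA: "x \<in> Xalpha_ef V R X \<alpha> e f"
    and vA: "v \<notin> Xalpha_ef V R X \<alpha> e f"
    and cs: "is_module (X \<union> {x,v} \<union> {z}) (ind R (X \<union> {x,v} \<union> {z})) (X \<union> {x,v})
    \<or> (\<exists>p\<in>X. is_module (X \<union> {x,v} \<union> {z}) (ind R (X \<union> {x,v} \<union> {z})) {p,z})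
    \<or> is_module (X \<union> {x,v} \<union> {z}) (ind R (X \<union> {x,v} \<union> {z})) {v,z}"
  shows "(z,x) \<in> f \<and> (x,z) \<in> e"
proof -
  let ?W = "X \<union> {x,v} \<union> {z}"
  have WV: "?W \<subseteq> V" using XV x z v by auto
  have XzV: "X \<union> {z} \<subseteq> V" using XV z by auto
  have XvV: "X \<union> {v} \<subseteq> V" using XV v by auto
  have zX: "z \<notin> X" and vX: "v \<notin> X" and xX: "x \<notin> X" using z v x by auto
  have zmod: "is_module (X \<union> {z}) (ind R (X \<union> {z})) {\<alpha>,z}" and zef: "(z,\<alpha>) \<in> e" "(\<alpha>,z) \<in> f"
    using zA unfolding Xalpha_ef_def Xalpha_def by auto
  have xef: "(x,\<alpha>) \<in> e" "(\<alpha>,x) \<in> f" using xA unfolding Xalpha_ef_def by auto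
  have hz: "\<forall>w\<in>X-{\<alpha>}. ((\<alpha>,w),(z,w))\<in>R \<and> ((w,\<alpha>),(w,z))\<in>R"
  proof
    fix w assume "w \<in> X - {\<alpha>}"
    then show "((\<alpha>,w),(z,w))\<in>R \<and> ((w,\<alpha>),(w,z))\<in>R" using mod_fact[OF ts XzV zmod, of \<alpha> z w] zX by auto
  qed
  from cs show ?thesis
  proof (elim disjE bexE)
    assume m: "is_module ?W (ind R ?W) (X \<union> {x,v})"
    have h1: "\<forall>a\<in>X. \<forall>b\<in>X. ((z,a),(z,b))\<in>R \<and> ((a,z),(b,z))\<in>R"
    proof (intro ballI)
      fix a b assume "a \<in> X" "b \<in> X"
      then show "((z,a),(z,b))\<in>R \<and> ((a,z),(b,z))\<in>R" using mod_fact[OF ts WV m, of a b z] zX xz zv by auto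
    qed
    show ?thesis using L1[OF ts XV pX al h1 hz] by blast
  next
    fix p assume p: "p \<in> X" and m: "is_module ?W (ind R ?W) {p,z}"
    have h2: "\<forall>w\<in>X-{p}. ((p,w),(z,w))\<in>R \<and> ((w,p),(w,z))\<in>R"
    proof
      fix w assume "w \<in> X - {p}"
      then show "((p,w),(z,w))\<in>R \<and> ((w,p),(w,z))\<in>R" using mod_fact[OF ts WV m, of p z w] zX by auto
    qed
    have pa: "p = \<alpha>"
    proof (rule ccontr)
      assume "p \<noteq> \<alpha>"
      then show False using L2[OF ts XV pX p al _ hz h2] by blast
    qed
    have "((\<alpha>,x),(z,x)) \<in> R \<and> ((x,\<alpha>),(x,z)) \<in> R"
      using mod_fact[OF ts WV m, of p z x] pa p xX xz by auto
    then show ?thesis using xef cls_closed[OF ts e] cls_closed[OF ts f] by blast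
  next
    assume m: "is_module ?W (ind R ?W) {v,z}"
    have hv: "\<forall>u\<in>X. ((v,u),(z,u)) \<in> R \<and> ((u,v),(u,z)) \<in> R"
    proof
      fix u assume u: "u \<in> X"
      then show "((v,u),(z,u)) \<in> R \<and> ((u,v),(u,z)) \<in> R"
        using mod_fact[OF ts WV m, of v z u] zX vX by auto
    qed
    have av: "((\<alpha>,w),(v,w)) \<in> R \<and> ((w,\<alpha>),(w,v)) \<in> R" if w: "w \<in> X - {\<alpha>}" for w
    proof -
      have "((\<alpha>,w),(z,w)) \<in> R" "((z,w),(v,w)) \<in> R" "((w,\<alpha>),(w,z)) \<in> R" "((w,z),(w,v)) \<in> R"
        using hz hv w ts_sym[OF ts] by blast+
      then show ?thesis using ts_trans[OF ts] by blast
    qed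
    have "is_module (X \<union> {v}) (ind R (X \<union> {v})) {\<alpha>,v}"
    proof (rule mod_intro[OF ts XvV])
      fix a b u assume a: "a \<in> {\<alpha>,v}" and b: "b \<in> {\<alpha>,v}" and "u \<in> X \<union> {v}" "u \<notin> {\<alpha>,v}"
      then have u: "u \<in> X - {\<alpha>}" by auto
      have uV: "u \<in> V" "\<alpha> \<in> V" "v \<in> V" using u al XV v by auto
      have "u \<noteq> \<alpha>" "u \<noteq> v" using u vX by auto
      then have rf: "((\<alpha>,u),(\<alpha>,u)) \<in> R" "((u,\<alpha>),(u,\<alpha>)) \<in> R" "((v,u),(v,u)) \<in> R" "((u,v),(u,v)) \<in> R"
        using ts_refl[OF ts] uV by auto
      show "((a,u),(b,u)) \<in> R \<and> ((u,a),(u,b)) \<in> R"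
        using a b av[OF u] rf ts_sym[OF ts] by blast
    qed (use al in auto)
    moreover have "((z,\<alpha>),(v,\<alpha>)) \<in> R" "((\<alpha>,z),(\<alpha>,v)) \<in> R" using hv al ts_sym[OF ts] by blast+
    then have "(v,\<alpha>) \<in> e" "(\<alpha>,v) \<in> f" using zef cls_closed[OF ts e] cls_closed[OF ts f] by blast+
    ultimately have "v \<in> Xalpha_ef V R X \<alpha> e f" unfolding Xalpha_ef_def Xalpha_def using v by auto
    then show ?thesis using vA by blast
  qed
qed

lemma cls_rel:
  assumes "two_structure V R" "e \<in> classes V R" "p \<in> e" "q \<in> e"
  shows "(p,q) \<in> R"
  using in_quotient_imp_in_rel[of "offdiag V" R e p q] assms unfolding two_structure_def classes_def by blast

theorem corollary3p4:
  fixes V X B :: "'a set" and R :: "(('a \<times> 'a) \<times> ('a \<times> 'a)) set" and v :: 'a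
  assumes "two_structure V R"
    and "X \<subset> V"
    and "is_prime X (ind R X)"
    and S3: "\<not> (\<exists>Y. Y \<subseteq> V - X \<and> card Y = 3 \<and> is_prime (X \<union> Y) (ind R (X \<union> Y)))"
    and "B \<in> qpart V R X"
    and "v \<in> (V - X) - B"
  shows "is_module B (ind R B) (Nplus V R X B v)
    \<and> is_module B (ind R B) (Nminus V R X B v)
    \<and> (Nplus V R X B v \<noteq> {} \<and> Nminus V R X B v \<noteq> {} \<longrightarrow>
        (\<forall>e\<in>classes V R. \<forall>f\<in>classes V R. B = angle_ef V R X e f \<longrightarrow>
           (\<forall>z\<in>Nminus V R X B v. \<forall>x\<in>Nplus V R X B v. (z, x) \<in> e \<and> (x, z) \<in> f))
      \<and> (\<forall>\<alpha>\<in>X. \<forall>e\<in>classes V R. \<forall>f\<in>classes V R. B = Xalpha_ef V R X \<alpha> e f \<longrightarrow>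
           (\<forall>z\<in>Nminus V R X B v. \<forall>x\<in>Nplus V R X B v. (z, x) \<in> f \<and> (x, z) \<in> e)))"
proof -
  note ts = assms(1)
  have XV: "X \<subseteq> V" using assms(2) by blast
  note pX = assms(3)
  have v: "v \<in> V - X" and vB: "v \<notin> B" using assms(6) by auto
  have Bform: "B = Ext V R X \<or> (\<exists>e f. e \<in> classes V R \<and> f \<in> classes V R \<and> B = angle_ef V R X e f)
      \<or> (\<exists>\<alpha> e f. \<alpha> \<in> X \<and> e \<in> classes V R \<and> f \<in> classes V R \<and> B = Xalpha_ef V R X \<alpha> e f)"
    using assms(5) unfolding qpart_def by blast
  have BV: "B \<subseteq> V - X"
    using Bform unfolding Ext_def angle_ef_def angle_def Xalpha_ef_def Xalpha_def by blast
  have BV': "B \<subseteq> V" using BV by blast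
  define Np where "Np = Nplus V R X B v"
  define Nm where "Nm = Nminus V R X B v"
  have NpB: "Np \<subseteq> B" and NmB: "Nm \<subseteq> B" unfolding Np_def Nm_def Nplus_def Nminus_def by auto
  have NpNm: "u \<in> B \<Longrightarrow> u \<notin> Np \<Longrightarrow> u \<in> Nm" for u unfolding Np_def Nm_def Nplus_def Nminus_def by auto
  have NmNp: "u \<in> B \<Longrightarrow> u \<notin> Nm \<Longrightarrow> u \<in> Np" for u unfolding Np_def Nm_def Nplus_def Nminus_def by auto
  have basic: "z \<in> V - X \<and> x \<in> V - X \<and> x \<noteq> z \<and> x \<noteq> v \<and> z \<noteq> v \<and> z \<in> B \<and> x \<in> B \<and>
      {x,v} \<in> gamma_edges V R X \<and> {z,v} \<notin> gamma_edges V R X"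
    if z: "z \<in> Nm" and x: "x \<in> Np" for z x
    using z x BV vB unfolding Np_def Nm_def Nplus_def Nminus_def by auto
  have cs: "is_module (X \<union> {x,v} \<union> {z}) (ind R (X \<union> {x,v} \<union> {z})) (X \<union> {x,v})
    \<or> (\<exists>p\<in>X. is_module (X \<union> {x,v} \<union> {z}) (ind R (X \<union> {x,v} \<union> {z})) {p,z})
    \<or> is_module (X \<union> {x,v} \<union> {z}) (ind R (X \<union> {x,v} \<union> {z})) {v,z}"
    if z: "z \<in> Nm" and x: "x \<in> Np" for z x
    using basic[OF z x] four_cases[OF ts XV pX S3 _ _ v] by blast
  have extres: False if "B = Ext V R X" "z \<in> Nm" "x \<in> Np" for z x
    using case_Ext[OF ts XV pX _ _ v _ _ _ _ _ cs[OF that(2,3)]] basic[OF that(2,3)] that(1) vB by blast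
  have angres: "(z,x) \<in> e \<and> (x,z) \<in> f"
    if "e \<in> classes V R" "f \<in> classes V R" "B = angle_ef V R X e f" "z \<in> Nm" "x \<in> Np" for e f z x
    using case_angle[OF ts XV pX _ _ v _ _ _ that(1,2) _ _ cs[OF that(4,5)]] basic[OF that(4,5)] that(3) vB by blast
  have xares: "(z,x) \<in> f \<and> (x,z) \<in> e"
    if "\<alpha> \<in> X" "e \<in> classes V R" "f \<in> classes V R" "B = Xalpha_ef V R X \<alpha> e f" "z \<in> Nm" "x \<in> Np" for \<alpha> e f z x
    using case_Xalpha[OF ts XV pX _ _ v _ _ _ that(1,2,3) _ _ _ cs[OF that(5,6)]] basic[OF that(5,6)] that(4) vB by blast
  have key: "((z,x),(z',x')) \<in> R \<and> ((x,z),(x',z')) \<in> R"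
    if z: "z \<in> Nm" "z' \<in> Nm" and x: "x \<in> Np" "x' \<in> Np" for z z' x x'
    using Bform
  proof (elim disjE exE conjE)
    assume "B = Ext V R X" then show ?thesis using extres z x by blast
  next
    fix e f assume h: "e \<in> classes V R" "f \<in> classes V R" "B = angle_ef V R X e f"
    show ?thesis using angres[OF h z(1) x(1)] angres[OF h z(2) x(2)] cls_rel[OF ts h(1)] cls_rel[OF ts h(2)] by blast
  next
    fix \<alpha> e f assume h: "\<alpha> \<in> X" "e \<in> classes V R" "f \<in> classes V R" "B = Xalpha_ef V R X \<alpha> e f"
    show ?thesis using xares[OF h z(1) x(1)] xares[OF h z(2) x(2)] cls_rel[OF ts h(2)] cls_rel[OF ts h(3)] by blast
  qed
  have m1: "is_module B (ind R B) Np"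
  proof (rule mod_intro[OF ts BV' NpB])
    fix a b u assume "a \<in> Np" "b \<in> Np" "u \<in> B" "u \<notin> Np"
    then show "((a,u),(b,u)) \<in> R \<and> ((u,a),(u,b)) \<in> R" using key NpNm by blast
  qed
  have m2: "is_module B (ind R B) Nm"
  proof (rule mod_intro[OF ts BV' NmB])
    fix a b u assume "a \<in> Nm" "b \<in> Nm" "u \<in> B" "u \<notin> Nm"
    then show "((a,u),(b,u)) \<in> R \<and> ((u,a),(u,b)) \<in> R" using key NmNp by blast
  qed
  show ?thesis
    unfolding Np_def[symmetric] Nm_def[symmetric]
    using m1 m2 angres xares by blast
qed

end
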